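(* Let $G$ be a Garside group. Whether an element $g\in G$ is periodic does not depend on the choice of Garside structure on $G$ (i.e. for every $g\in G$ and every two Garside structures $(G,G_1^+,\Delta_1)$, $(G,G_2^+,\Delta_2)$, $g$ is periodic with respect to $\Delta_1$ iff it is periodic with respect to $\Delta_2$) if and only if the center $Z(G)$ is cyclic.
   Context: An atomic monoid is a monoid $M$ generated by its atoms (elements $a\ne1$ such that $a=bc$ implies $b=1$ or $c=1$) in which, for each $a\in M$, the supremum $\|a\|$ of lengths of expressions of $a$ as a product of atoms is finite. On $M$ define $a\le_L b$ iff $ac=b$ for some $c\in M$, and $a\le_R b$ iff $ca=b$ for some $c\in M$. A Garside monoid is an atomic monoid $M$ that is left and right cancellative, such that $(M,\le_L)$ and $(M,\le_R)$ are lattices, and containing an element $\Delta$ (a Garside element) such that (a) for each $a\in M$, $a\le_L\Delta$ iff $a\le_R\Delta$, and (b) the set $\{a\in M: a\le_L\Delta\}$ is finite and generates $M$. A Garside group is the group of fractions $G$ of a Garside monoid $M$; $M$ is identified with its image $G^+\subset G$, and $(G,G^+,\Delta)$ is a Garside structure on $G$. An element $g\in G$ is periodic with respect to $\Delta$ if either $g=1$ or $g^k$ and $\Delta^\ell$ are conjugate for some nonzero integers $k,\ell$. *)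

theory Defs
  imports "HOL-Algebra.Algebra"
begin

text \<open>Garside structures on a group G (HOL-Algebra idiom). A positive monoid is
  represented by its image P, a submonoid of carrier G.\<close>

definition prod_list_in :: "('a, 'b) monoid_scheme \<Rightarrow> 'a list \<Rightarrow> 'a" where
  "prod_list_in G xs = foldr (\<lambda>x y. x \<otimes>\<^bsub>G\<^esub> y) xs \<one>\<^bsub>G\<^esub>"

definition ldiv_in :: "('a, 'b) monoid_scheme \<Rightarrow> 'a set \<Rightarrow> 'a \<Rightarrow> 'a \<Rightarrow> bool" where
  "ldiv_in G P a b \<longleftrightarrow> (\<exists>c\<in>P. a \<otimes>\<^bsub>G\<^esub> c = b)"

definition rdiv_in :: "('a, 'b) monoid_scheme \<Rightarrow> 'a set \<Rightarrow> 'a \<Rightarrow> 'a \<Rightarrow> bool" where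
  "rdiv_in G P a b \<longleftrightarrow> (\<exists>c\<in>P. c \<otimes>\<^bsub>G\<^esub> a = b)"

definition atom_in :: "('a, 'b) monoid_scheme \<Rightarrow> 'a set \<Rightarrow> 'a \<Rightarrow> bool" where
  "atom_in G P a \<longleftrightarrow> a \<in> P \<and> a \<noteq> \<one>\<^bsub>G\<^esub> \<and>
     (\<forall>b\<in>P. \<forall>c\<in>P. a = b \<otimes>\<^bsub>G\<^esub> c \<longrightarrow> b = \<one>\<^bsub>G\<^esub> \<or> c = \<one>\<^bsub>G\<^esub>)"

definition submonoid_in :: "('a, 'b) monoid_scheme \<Rightarrow> 'a set \<Rightarrow> bool" where
  "submonoid_in G P \<longleftrightarrow> P \<subseteq> carrier G \<and> \<one>\<^bsub>G\<^esub> \<in> P \<and>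
     (\<forall>a\<in>P. \<forall>b\<in>P. a \<otimes>\<^bsub>G\<^esub> b \<in> P)"

definition atomic_in :: "('a, 'b) monoid_scheme \<Rightarrow> 'a set \<Rightarrow> bool" where
  "atomic_in G P \<longleftrightarrow>
     (\<forall>a\<in>P. \<exists>xs. set xs \<subseteq> {x. atom_in G P x} \<and> prod_list_in G xs = a) \<and>
     (\<forall>a\<in>P. \<exists>N::nat. \<forall>xs. set xs \<subseteq> {x. atom_in G P x} \<and> prod_list_in G xs = a
                          \<longrightarrow> length xs \<le> N)"

definition cancellative_in :: "('a, 'b) monoid_scheme \<Rightarrow> 'a set \<Rightarrow> bool" where
  "cancellative_in G P \<longleftrightarrow>
     (\<forall>a\<in>P. \<forall>b\<in>P. \<forall>c\<in>P. a \<otimes>\<^bsub>G\<^esub> b = a \<otimes>\<^bsub>G\<^esub> c \<longrightarrow> b = c) \<and>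
     (\<forall>a\<in>P. \<forall>b\<in>P. \<forall>c\<in>P. b \<otimes>\<^bsub>G\<^esub> a = c \<otimes>\<^bsub>G\<^esub> a \<longrightarrow> b = c)"

definition lorder_in :: "('a, 'b) monoid_scheme \<Rightarrow> 'a set \<Rightarrow> 'a gorder" where
  "lorder_in G P = \<lparr>carrier = P, eq = (=), le = ldiv_in G P\<rparr>"

definition rorder_in :: "('a, 'b) monoid_scheme \<Rightarrow> 'a set \<Rightarrow> 'a gorder" where
  "rorder_in G P = \<lparr>carrier = P, eq = (=), le = rdiv_in G P\<rparr>"

definition garside_monoid_in :: "('a, 'b) monoid_scheme \<Rightarrow> 'a set \<Rightarrow> bool" where
  "garside_monoid_in G P \<longleftrightarrow> submonoid_in G P \<and> atomic_in G P \<and> cancellative_in G P \<and>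
     lattice (lorder_in G P) \<and> lattice (rorder_in G P)"

definition garside_element_in :: "('a, 'b) monoid_scheme \<Rightarrow> 'a set \<Rightarrow> 'a \<Rightarrow> bool" where
  "garside_element_in G P D \<longleftrightarrow> D \<in> P \<and>
     (\<forall>a\<in>P. ldiv_in G P a D \<longleftrightarrow> rdiv_in G P a D) \<and>
     finite {a\<in>P. ldiv_in G P a D} \<and>
     (\<forall>a\<in>P. \<exists>xs. set xs \<subseteq> {b\<in>P. ldiv_in G P b D} \<and> prod_list_in G xs = a)"

text \<open>(G, P, D) is a Garside structure on G: P (the image of a Garside monoid
  with Garside element D) is a submonoid of G and G is its group of fractions,
  i.e. every element of G is a fraction a b^-1 with a, b in P (P embeds in G,
  being a subset of it).\<close>
definition garside_structure :: "('a, 'b) monoid_scheme \<Rightarrow> 'a set \<Rightarrow> 'a \<Rightarrow> bool" where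
  "garside_structure G P D \<longleftrightarrow> garside_monoid_in G P \<and> garside_element_in G P D \<and>
     (\<forall>g\<in>carrier G. \<exists>a\<in>P. \<exists>b\<in>P. g = a \<otimes>\<^bsub>G\<^esub> inv\<^bsub>G\<^esub> b)"

definition garside_group :: "('a, 'b) monoid_scheme \<Rightarrow> bool" where
  "garside_group G \<longleftrightarrow> group G \<and> (\<exists>P D. garside_structure G P D)"

definition periodic_wrt :: "('a, 'b) monoid_scheme \<Rightarrow> 'a \<Rightarrow> 'a \<Rightarrow> bool" where
  "periodic_wrt G D g \<longleftrightarrow> g = \<one>\<^bsub>G\<^esub> \<or>
     (\<exists>k::int. \<exists>l::int. k \<noteq> 0 \<and> l \<noteq> 0 \<and>
        (\<exists>h\<in>carrier G. inv\<^bsub>G\<^esub> h \<otimes>\<^bsub>G\<^esub> (g [^]\<^bsub>G\<^esub> k) \<otimes>\<^bsub>G\<^esub> h = D [^]\<^bsub>G\<^esub> l))"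

definition center_of :: "('a, 'b) monoid_scheme \<Rightarrow> 'a set" where
  "center_of G = {z \<in> carrier G. \<forall>x\<in>carrier G. z \<otimes>\<^bsub>G\<^esub> x = x \<otimes>\<^bsub>G\<^esub> z}"

end

theory Submission imports Defs begin

lemma prod_list_in_simps[simp]:
  "prod_list_in G [] = \<one>\<^bsub>G\<^esub>"
  "prod_list_in G (x # xs) = x \<otimes>\<^bsub>G\<^esub> prod_list_in G xs"
  by (simp_all add: prod_list_in_def)

context group begin
lemma cancel1[simp]: "x \<in> carrier G \<Longrightarrow> y \<in> carrier G \<Longrightarrow> x \<otimes> (inv x \<otimes> y) = y"
  by (simp add: m_assoc[symmetric])
lemma cancel2[simp]: "x \<in> carrier G \<Longrightarrow> y \<in> carrier G \<Longrightarrow> inv x \<otimes> (x \<otimes> y) = y"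
  by (simp add: m_assoc[symmetric])

lemma comm_mult: "a \<in> carrier G \<Longrightarrow> b \<in> carrier G \<Longrightarrow> x \<in> carrier G \<Longrightarrow>
  a \<otimes> x = x \<otimes> a \<Longrightarrow> b \<otimes> x = x \<otimes> b \<Longrightarrow> (a \<otimes> b) \<otimes> x = x \<otimes> (a \<otimes> b)"
  by (metis m_assoc m_closed)

lemma swap: "a \<in> carrier G \<Longrightarrow> x \<in> carrier G \<Longrightarrow> p \<in> carrier G \<Longrightarrow> a \<otimes> x = x \<otimes> a \<Longrightarrow>
   a \<otimes> (x \<otimes> p) = x \<otimes> (a \<otimes> p)"
  by (metis m_assoc)

lemma comm_inv: assumes "a \<in> carrier G" "x \<in> carrier G" "a \<otimes> x = x \<otimes> a"
  shows "inv a \<otimes> x = x \<otimes> inv a"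
proof -
  have "inv a \<otimes> x = inv a \<otimes> (x \<otimes> (a \<otimes> inv a))" using assms by simp
  also have "\<dots> = inv a \<otimes> ((x \<otimes> a) \<otimes> inv a)" using assms by (simp add: m_assoc)
  also have "\<dots> = inv a \<otimes> ((a \<otimes> x) \<otimes> inv a)" using assms by simp
  also have "\<dots> = x \<otimes> inv a" using assms(1,2) by (simp add: m_assoc)
  finally show ?thesis .
qed

end

locale gs = group G for G (structure) +
  fixes P D
  assumes gs: "garside_structure G P D"
begin

definition At where "At = {x. atom_in G P x}"
definition S where "S = {a\<in>P. ldiv_in G P a D}"

lemma gm: "garside_monoid_in G P" using gs by (simp add: garside_structure_def)
lemma ge: "garside_element_in G P D" using gs by (simp add: garside_structure_def)
lemma frac: "\<And>g. g \<in> carrier G \<Longrightarrow> \<exists>a\<in>P. \<exists>b\<in>P. g = a \<otimes> inv b"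
  using gs by (simp add: garside_structure_def)

lemma P_sub: "P \<subseteq> carrier G" using gm by (simp add: garside_monoid_in_def submonoid_in_def)
lemma P_car[simp]: "a \<in> P \<Longrightarrow> a \<in> carrier G" using P_sub by auto
lemma one_P[simp]: "\<one> \<in> P" using gm by (simp add: garside_monoid_in_def submonoid_in_def)
lemma mult_P[simp]: "a \<in> P \<Longrightarrow> b \<in> P \<Longrightarrow> a \<otimes> b \<in> P"
  using gm by (simp add: garside_monoid_in_def submonoid_in_def)
lemma D_P[simp]: "D \<in> P" using ge by (simp add: garside_element_in_def)
lemma S_fin: "finite S" using ge by (simp add: garside_element_in_def S_def)
lemma S_gen: "a \<in> P \<Longrightarrow> \<exists>xs. set xs \<subseteq> S \<and> prod_list_in G xs = a"
  using ge by (simp add: garside_element_in_def S_def)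
lemma S_lr: "a \<in> P \<Longrightarrow> ldiv_in G P a D \<longleftrightarrow> rdiv_in G P a D"
  using ge by (simp add: garside_element_in_def)
lemma At_P: "x \<in> At \<Longrightarrow> x \<in> P" by (simp add: At_def atom_in_def)
lemma At_gen: "a \<in> P \<Longrightarrow> \<exists>xs. set xs \<subseteq> At \<and> prod_list_in G xs = a"
  using gm by (simp add: garside_monoid_in_def atomic_in_def At_def)
lemma At_bnd: "a \<in> P \<Longrightarrow> \<exists>N::nat. \<forall>xs. set xs \<subseteq> At \<and> prod_list_in G xs = a \<longrightarrow> length xs \<le> N"
  using gm by (simp add: garside_monoid_in_def atomic_in_def At_def)
lemma lcancel: "a \<in> P \<Longrightarrow> b \<in> P \<Longrightarrow> c \<in> P \<Longrightarrow> a \<otimes> b = a \<otimes> c \<Longrightarrow> b = c"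
  by (meson P_car l_cancel)
lemma pow_P[simp]: "a \<in> P \<Longrightarrow> a [^] (n::nat) \<in> P"
  by (induction n) auto

lemma prod_P[simp]: "set xs \<subseteq> P \<Longrightarrow> prod_list_in G xs \<in> P"
  by (induction xs) auto
lemma prod_car[simp]: "set xs \<subseteq> carrier G \<Longrightarrow> prod_list_in G xs \<in> carrier G"
  by (induction xs) auto
lemma prod_append: "set xs \<subseteq> carrier G \<Longrightarrow> set ys \<subseteq> carrier G \<Longrightarrow>
  prod_list_in G (xs @ ys) = prod_list_in G xs \<otimes> prod_list_in G ys"
  by (induction xs) (auto simp: m_assoc)

definition len where
  "len a = (GREATEST n. \<exists>xs. set xs \<subseteq> At \<and> prod_list_in G xs = a \<and> length xs = n)"

lemma len_ge: assumes "a \<in> P" "set xs \<subseteq> At" "prod_list_in G xs = a"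
  shows "length xs \<le> len a"
proof -
  obtain N where N: "\<forall>xs. set xs \<subseteq> At \<and> prod_list_in G xs = a \<longrightarrow> length xs \<le> N"
    using At_bnd[OF assms(1)] by blast
  show ?thesis unfolding len_def
    by (rule Greatest_le_nat[where b=N]) (use assms N in auto)
qed

lemma len_ex: assumes "a \<in> P"
  shows "\<exists>xs. set xs \<subseteq> At \<and> prod_list_in G xs = a \<and> length xs = len a"
proof -
  obtain N where N: "\<forall>xs. set xs \<subseteq> At \<and> prod_list_in G xs = a \<longrightarrow> length xs \<le> N"
    using At_bnd[OF assms(1)] by blast
  obtain xs where "set xs \<subseteq> At \<and> prod_list_in G xs = a" using At_gen[OF assms] by blast
  then show ?thesis unfolding len_def
    by (rule_tac GreatestI_nat[where b=N]) (use N in auto)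
qed

lemma At_car: "set xs \<subseteq> At \<Longrightarrow> set xs \<subseteq> carrier G"
  using At_P P_car by blast

lemma len_mult: assumes "a \<in> P" "b \<in> P" shows "len a + len b \<le> len (a \<otimes> b)"
proof -
  obtain xs where xs: "set xs \<subseteq> At" "prod_list_in G xs = a" "length xs = len a" using len_ex[OF assms(1)] by blast
  obtain ys where ys: "set ys \<subseteq> At" "prod_list_in G ys = b" "length ys = len b" using len_ex[OF assms(2)] by blast
  have "prod_list_in G (xs @ ys) = a \<otimes> b" using xs ys prod_append At_car by metis
  then have "length (xs @ ys) \<le> len (a \<otimes> b)"
    by (rule_tac len_ge) (use xs ys assms in auto)
  then show ?thesis using xs ys by simp
qed

lemma len_one: "len \<one> = 0"
  using len_mult[of \<one> \<one>] by simp

lemma len_zero: assumes "a \<in> P" "len a = 0" shows "a = \<one>"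
  using len_ex[OF assms(1)] assms(2) by auto

lemma no_units: assumes "a \<in> P" "b \<in> P" "a \<otimes> b = \<one>" shows "a = \<one>" "b = \<one>"
  using len_mult[OF assms(1,2)] assms len_one len_zero by auto

lemma len_pos: "a \<in> P \<Longrightarrow> a \<noteq> \<one> \<Longrightarrow> 0 < len a"
  using len_zero by blast


lemma S_P: "s \<in> S \<Longrightarrow> s \<in> P" by (simp add: S_def)

lemma comm_prod: assumes "set xs \<subseteq> carrier G" "x \<in> carrier G" "\<forall>s\<in>set xs. s \<otimes> x = x \<otimes> s"
  shows "prod_list_in G xs \<otimes> x = x \<otimes> prod_list_in G xs"
  using assms
proof (induction xs)
  case Nil then show ?case by simp
next
  case (Cons a xs)
  then have IH: "prod_list_in G xs \<otimes> x = x \<otimes> prod_list_in G xs" by simp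
  have "prod_list_in G (a#xs) \<otimes> x = a \<otimes> (prod_list_in G xs \<otimes> x)" using Cons.prems by (simp add: m_assoc)
  also have "\<dots> = a \<otimes> (x \<otimes> prod_list_in G xs)" using IH by simp
  also have "\<dots> = x \<otimes> prod_list_in G (a#xs)" using Cons.prems by (simp add: swap)
  finally show ?case .
qed

lemma comm_from_P: assumes "x \<in> carrier G" "\<forall>a\<in>P. a \<otimes> x = x \<otimes> a"
  shows "\<forall>g\<in>carrier G. g \<otimes> x = x \<otimes> g"
proof
  fix g assume g: "g \<in> carrier G"
  obtain a b where ab: "a \<in> P" "b \<in> P" "g = a \<otimes> inv b" using frac[OF g] by blast
  have 1: "inv b \<otimes> x = x \<otimes> inv b" using comm_inv[of b x] ab assms by auto
  have "g \<otimes> x = a \<otimes> (inv b \<otimes> x)" using ab assms by (simp add: m_assoc)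
  also have "\<dots> = a \<otimes> (x \<otimes> inv b)" using 1 by simp
  also have "\<dots> = x \<otimes> g" using ab assms by (simp add: swap)
  finally show "g \<otimes> x = x \<otimes> g" .
qed

lemma comm_from_S: assumes "x \<in> carrier G" "\<forall>s\<in>S. s \<otimes> x = x \<otimes> s"
  shows "\<forall>g\<in>carrier G. g \<otimes> x = x \<otimes> g"
proof (rule comm_from_P[OF assms(1)], rule)
  fix a assume a: "a \<in> P"
  obtain xs where xs: "set xs \<subseteq> S" "prod_list_in G xs = a" using S_gen[OF a] by blast
  have "set xs \<subseteq> carrier G" using xs S_P P_car by blast
  then show "a \<otimes> x = x \<otimes> a" using comm_prod[of xs x] xs assms by auto
qed

lemma conj_S: assumes "s \<in> S" shows "inv D \<otimes> s \<otimes> D \<in> S"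
proof -
  have s: "s \<in> P" "ldiv_in G P s D" using assms by (auto simp: S_def)
  then obtain t where t: "t \<in> P" "s \<otimes> t = D" by (auto simp: ldiv_in_def)
  then have "rdiv_in G P t D" using s by (auto simp: rdiv_in_def)
  then have "ldiv_in G P t D" using S_lr t by auto
  then obtain u where u: "u \<in> P" "t \<otimes> u = D" by (auto simp: ldiv_in_def)
  have "inv D \<otimes> s \<otimes> D = inv D \<otimes> s \<otimes> (t \<otimes> u)" by (simp only: u(2))
  also have "\<dots> = inv D \<otimes> (s \<otimes> t) \<otimes> u" using u(1) s(1) t(1) by (simp add: m_assoc)
  also have "\<dots> = inv D \<otimes> D \<otimes> u" by (simp only: t(2))
  also have "\<dots> = u" using u by simp
  finally have e: "inv D \<otimes> s \<otimes> D = u" .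
  have "rdiv_in G P u D" using t u by (auto simp: rdiv_in_def)
  then have "ldiv_in G P u D" using S_lr u by auto
  then show ?thesis using e u by (simp add: S_def)
qed

lemma conj_S_pow: assumes "s \<in> S" shows "inv (D [^] (n::nat)) \<otimes> s \<otimes> D [^] n \<in> S"
proof (induction n)
  case 0 then show ?case using assms S_P by simp
next
  case (Suc n)
  have "inv (D [^] Suc n) \<otimes> s \<otimes> D [^] Suc n = inv D \<otimes> (inv (D [^] n) \<otimes> s \<otimes> D [^] n) \<otimes> D"
    using assms S_P by (simp add: m_assoc inv_mult_group)
  then show ?case using conj_S[OF Suc] by simp
qed

lemma central_power: "\<exists>e::nat. e > 0 \<and> (\<forall>g\<in>carrier G. g \<otimes> D [^] e = D [^] e \<otimes> g)"
proof -
  define f where "f n = (\<lambda>s\<in>S. inv (D [^] (n::nat)) \<otimes> s \<otimes> D [^] n)" for n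
  have "range f \<subseteq> S \<rightarrow>\<^sub>E S" using conj_S_pow by (auto simp: f_def)
  then have "finite (range f)" using finite_PiE[OF S_fin, of "\<lambda>_. S"] S_fin finite_subset by blast
  then have "\<not> inj f" using finite_imageD infinite_UNIV_nat by blast
  then obtain i j where ij: "f i = f j" "i \<noteq> j" unfolding inj_def by blast
  then obtain i j where ij: "f i = f j" "i < j"
    by (metis linorder_neqE_nat)
  define A where "A = D [^] i"
  define Xp where "Xp = D [^] (j - i)"
  have AXp: "A \<in> carrier G" "Xp \<in> carrier G" by (auto simp: A_def Xp_def)
  have Dj: "D [^] j = A \<otimes> Xp" using ij(2) by (simp add: A_def Xp_def nat_pow_mult)
  have comm: "A \<otimes> Xp = Xp \<otimes> A" by (simp add: A_def Xp_def nat_pow_mult add.commute)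
  have cs: "s \<otimes> Xp = Xp \<otimes> s" if s: "s \<in> S" for s
  proof -
    have sc: "s \<in> carrier G" using s S_P by auto
    define t where "t = inv A \<otimes> s \<otimes> A"
    have tc: "t \<in> carrier G" using sc AXp by (simp add: t_def)
    have "t = inv (A \<otimes> Xp) \<otimes> s \<otimes> (A \<otimes> Xp)"
      using fun_cong[OF ij(1), of s] s by (simp add: f_def A_def Dj t_def)
    also have "\<dots> = inv Xp \<otimes> t \<otimes> Xp" using AXp sc by (simp add: inv_mult_group m_assoc t_def)
    finally have teq: "t = inv Xp \<otimes> t \<otimes> Xp" .
    have "Xp \<otimes> t = Xp \<otimes> (inv Xp \<otimes> t \<otimes> Xp)" using arg_cong[OF teq, of "\<lambda>y. Xp \<otimes> y"] .
    also have "\<dots> = t \<otimes> Xp" using AXp tc by (simp add: m_assoc)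
    finally have tX: "t \<otimes> Xp = Xp \<otimes> t" by simp
    have sA: "s = A \<otimes> t \<otimes> inv A" using AXp sc by (simp add: t_def m_assoc)
    have iA: "inv A \<otimes> Xp = Xp \<otimes> inv A" using comm_inv[of A Xp] AXp comm by simp
    have "(A \<otimes> t \<otimes> inv A) \<otimes> Xp = Xp \<otimes> (A \<otimes> t \<otimes> inv A)"
      by (rule comm_mult, rule_tac [4] comm_mult) (use AXp tc comm tX iA in auto)
    then show ?thesis using sA by simp
  qed
  have "\<forall>g\<in>carrier G. g \<otimes> Xp = Xp \<otimes> g" by (rule comm_from_S) (use AXp cs in auto)
  then show ?thesis using ij(2) by (rule_tac x="j-i" in exI) (simp add: Xp_def)
qed


lemma pow_ne_one: assumes "x \<in> P" "x \<noteq> \<one>" "n > 0" shows "x [^] (n::nat) \<noteq> \<one>"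
proof
  assume h: "x [^] n = \<one>"
  have "x [^] n = x [^] Suc (n - 1)" using assms(3) by simp
  also have "\<dots> = x \<otimes> x [^] (n - 1)" using P_car[OF assms(1)] by (rule nat_pow_Suc2)
  finally have "x [^] n = x \<otimes> x [^] (n - 1)" .
  then have "x \<otimes> x [^] (n - 1) = \<one>" using h by simp
  then have "x = \<one>" by (rule no_units(1)[OF assms(1) pow_P[OF assms(1)]])
  then show False using assms(2) by contradiction
qed

lemma triv: assumes "D = \<one>" shows "carrier G = {\<one>}"
proof -
  have S1: "s = \<one>" if "s \<in> S" for s
  proof -
    have "s \<in> P" "ldiv_in G P s D" using that by (auto simp: S_def)
    then have "s \<in> P" "ldiv_in G P s \<one>" using assms by auto
    then obtain t where "t \<in> P" "s \<otimes> t = \<one>" by (auto simp: ldiv_in_def)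
    then show ?thesis using no_units \<open>s \<in> P\<close> by blast
  qed
  have P1: "a = \<one>" if aP: "a \<in> P" for a
  proof -
    obtain xs where xs: "set xs \<subseteq> S" "prod_list_in G xs = a" using S_gen[OF aP] by blast
    have "prod_list_in G xs = \<one>" using xs(1) by (induction xs) (auto dest!: S1)
    then show ?thesis using xs by simp
  qed
  show ?thesis
  proof
    show "carrier G \<subseteq> {\<one>}"
    proof
      fix g assume "g \<in> carrier G"
      then obtain a b where "a \<in> P" "b \<in> P" "g = a \<otimes> inv b" using frac by blast
      moreover then have "a = \<one>" "b = \<one>" using P1 by auto
      ultimately show "g \<in> {\<one>}" by auto
    qed
  qed auto
qed

lemma triv_pow: assumes "D [^] (n::nat) = \<one>" "n > 0" shows "carrier G = {\<one>}"
proof -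
  have "D = \<one>" using pow_ne_one[OF D_P _ assms(2)] assms(1) by blast
  then show ?thesis by (rule triv)
qed

end

context group begin

lemma conj_pow_nat: "h \<in> carrier G \<Longrightarrow> x \<in> carrier G \<Longrightarrow>
   (inv h \<otimes> x \<otimes> h) [^] (n::nat) = inv h \<otimes> x [^] n \<otimes> h"
proof (induction n)
  case 0 then show ?case by simp
next
  case (Suc n)
  then show ?case by (simp add: m_assoc)
qed

definition cen where "cen x \<longleftrightarrow> x \<in> carrier G \<and> (\<forall>g\<in>carrier G. g \<otimes> x = x \<otimes> g)"

lemma cen_center: "cen x \<longleftrightarrow> x \<in> center_of G"
  by (auto simp: cen_def center_of_def)

lemma cen_mult: "cen x \<Longrightarrow> cen y \<Longrightarrow> cen (x \<otimes> y)"
  unfolding cen_def by (metis m_assoc m_closed)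

lemma cen_inv: "cen x \<Longrightarrow> cen (inv x)"
  unfolding cen_def
proof (intro conjI ballI)
  fix g assume h: "x \<in> carrier G \<and> (\<forall>g\<in>carrier G. g \<otimes> x = x \<otimes> g)" "g \<in> carrier G"
  have xc: "x \<in> carrier G" using h by auto
  have "x \<otimes> g = g \<otimes> x" using h by auto
  then show "g \<otimes> inv x = inv x \<otimes> g" using comm_inv[of x g] xc h(2) by simp
qed (auto)

lemma cen_one: "cen \<one>" by (simp add: cen_def)

lemma cen_pow_nat: "cen x \<Longrightarrow> cen (x [^] (n::nat))"
  by (induction n) (auto simp: cen_one cen_mult)

lemma cen_pow: assumes "cen x" shows "cen (x [^] (n::int))"
proof -
  have e: "x [^] n = (if n < 0 then inv (x [^] nat (- n)) else x [^] nat n)" by (rule int_pow_def2)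
  show ?thesis
  proof (cases "n < 0")
    case True show ?thesis unfolding e if_P[OF True] by (rule cen_inv[OF cen_pow_nat[OF assms]])
  next
    case False show ?thesis unfolding e if_not_P[OF False] by (rule cen_pow_nat[OF assms])
  qed
qed

lemma cen_conj: "cen x \<Longrightarrow> h \<in> carrier G \<Longrightarrow> inv h \<otimes> x \<otimes> h = x"
  unfolding cen_def by (simp add: m_assoc)

lemma conj_cen: assumes "cen C" "h \<in> carrier G" "Y \<in> carrier G" "inv h \<otimes> Y \<otimes> h = C"
  shows "Y = C"
proof -
  have Cc: "C \<in> carrier G" using assms(1) by (simp add: cen_def)
  have "Y = h \<otimes> (inv h \<otimes> Y \<otimes> h) \<otimes> inv h" using assms(2,3) by (simp add: m_assoc)
  also have "\<dots> = h \<otimes> C \<otimes> inv h" using assms(4) by simp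
  also have "\<dots> = C" using cen_conj[OF assms(1), of "inv h"] assms(2) by simp
  finally show ?thesis .
qed

lemma center_subgroup: "subgroup (center_of G) G"
proof (rule subgroupI)
  show "center_of G \<subseteq> carrier G" unfolding center_of_def by blast
  show "center_of G \<noteq> {}" using cen_one cen_center by blast
  show "\<And>a. a \<in> center_of G \<Longrightarrow> inv a \<in> center_of G" using cen_inv cen_center by blast
  show "\<And>a b. a \<in> center_of G \<Longrightarrow> b \<in> center_of G \<Longrightarrow> a \<otimes> b \<in> center_of G"
    using cen_mult cen_center by blast
qed

lemma cyclic_center: "cyclic_group (G\<lparr>carrier := center_of G\<rparr>) \<longleftrightarrow>
   (\<exists>z\<in>center_of G. center_of G = range (\<lambda>n::int. z [^] n))"
proof -
  interpret Z: group "G\<lparr>carrier := center_of G\<rparr>"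
    using subgroup.subgroup_is_group[OF center_subgroup] is_group by blast
  have eq: "\<And>z. z \<in> center_of G \<Longrightarrow> (\<lambda>n::int. z [^]\<^bsub>G\<lparr>carrier := center_of G\<rparr>\<^esub> n) = (\<lambda>n. z [^] n)"
    using int_pow_consistent[OF center_subgroup] by (intro ext) simp
  have "cyclic_group (G\<lparr>carrier := center_of G\<rparr>) \<longleftrightarrow>
     (\<exists>z\<in>center_of G. center_of G = range (\<lambda>n::int. z [^]\<^bsub>G\<lparr>carrier := center_of G\<rparr>\<^esub> n))"
    using Z.cyclic_group by simp
  also have "\<dots> \<longleftrightarrow> (\<exists>z\<in>center_of G. center_of G = range (\<lambda>n::int. z [^] n))"
    by (rule bex_cong) (simp_all add: eq)
  finally show ?thesis .
qed

end

context gs begin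

lemma periodic_canon:
  assumes z: "z \<in> carrier G" "\<forall>c. cen c \<longrightarrow> (\<exists>m::int. c = z [^] m)" and g: "g \<in> carrier G"
  shows "periodic_wrt G D g \<longleftrightarrow> g = \<one> \<or> (\<exists>(k::int) (j::int). k \<noteq> 0 \<and> j \<noteq> 0 \<and> g [^] k = z [^] j)"
proof -
  from central_power obtain e::nat where e0: "e > 0 \<and> (\<forall>g\<in>carrier G. g \<otimes> D [^] e = D [^] e \<otimes> g)" ..
  have e: "e > 0" "\<forall>g\<in>carrier G. g \<otimes> D [^] e = D [^] e \<otimes> g" using e0 by (rule conjunct1, rule conjunct2)
  define E where "E = D [^] e"
  have cE: "cen E" unfolding cen_def E_def using e(2) D_P P_car nat_pow_closed by blast
  obtain m :: int where m: "E = z [^] m" using z(2) cE by blast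
  show ?thesis
  proof (cases "carrier G = {\<one>}")
    case True
    then show ?thesis using g by (simp add: periodic_wrt_def)
  next
    case False
    then have E1: "E \<noteq> \<one>" using triv_pow[of e] e(1) unfolding E_def by blast
    then have m0: "m \<noteq> 0" using m by auto
    have DE: "D [^] (int e * l) = E [^] l" for l
      by (simp add: E_def int_pow_pow[symmetric] int_pow_int)
    show ?thesis
    proof
      assume "periodic_wrt G D g"
      then consider "g = \<one>" | k l h where "k \<noteq> 0" "l \<noteq> (0::int)" "h \<in> carrier G"
          "inv h \<otimes> (g [^] (k::int)) \<otimes> h = D [^] l"
        unfolding periodic_wrt_def by blast
      then show "g = \<one> \<or> (\<exists>(k::int) (j::int). k \<noteq> 0 \<and> j \<noteq> 0 \<and> g [^] k = z [^] j)"
      proof cases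
        case 1 then show ?thesis by simp
      next
        case 2
        have "(inv h \<otimes> (g [^] k) \<otimes> h) [^] e = (D [^] l) [^] e" using 2 by simp
        then have "inv h \<otimes> (g [^] k) [^] e \<otimes> h = (D [^] l) [^] e" using 2 g conj_pow_nat[of h "g [^] k" e] by simp
        then have "inv h \<otimes> g [^] (k * int e) \<otimes> h = D [^] (int e * l)" using g
          by (simp add: int_pow_pow int_pow_int[symmetric] mult.commute)
        then have "inv h \<otimes> g [^] (k * int e) \<otimes> h = E [^] l" by (simp add: DE)
        then have "g [^] (k * int e) = E [^] l"
          by (rule conj_cen[OF cen_pow[OF cE] 2(3) int_pow_closed[OF g]])
        also have "\<dots> = z [^] (m * l)" unfolding m by (rule int_pow_pow[OF z(1)])
        finally have eq: "g [^] (k * int e) = z [^] (m * l)" .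
        have nz: "k * int e \<noteq> 0" "m * l \<noteq> 0" using 2(1,2) e(1) m0 by simp_all
        have c: "k * int e \<noteq> 0 \<and> m * l \<noteq> 0 \<and> g [^] (k * int e) = z [^] (m * l)"
          using eq nz by (intro conjI)
        show ?thesis
          apply (rule disjI2)
          apply (rule exI[where x="k * int e"])
          apply (rule exI[where x="m * l"])
          apply (rule c)
          done
      qed
    next
      assume "g = \<one> \<or> (\<exists>(k::int) (j::int). k \<noteq> 0 \<and> j \<noteq> 0 \<and> g [^] k = z [^] j)"
      then show "periodic_wrt G D g"
      proof
        assume "g = \<one>" then show ?thesis by (simp add: periodic_wrt_def)
      next
        assume "\<exists>(k::int) (j::int). k \<noteq> 0 \<and> j \<noteq> 0 \<and> g [^] k = z [^] j"
        then obtain k j :: int where kj: "k \<noteq> 0" "j \<noteq> 0" "g [^] k = z [^] j" by blast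
        have "g [^] (k * m) = (g [^] k) [^] m" by (rule int_pow_pow[OF g, symmetric])
        also have "\<dots> = z [^] (m * j)" unfolding kj(3) int_pow_pow[OF z(1)] by (simp add: mult.commute)
        also have "\<dots> = E [^] j" unfolding m by (rule int_pow_pow[OF z(1), symmetric])
        also have "\<dots> = D [^] (int e * j)" by (simp add: DE)
        finally have "inv \<one> \<otimes> g [^] (k * m) \<otimes> \<one> = D [^] (int e * j)" using g by simp
        then show ?thesis unfolding periodic_wrt_def using kj m0 e(1)
          by (intro disjI2 exI[where x="k * m"] exI[where x="int e * j"] conjI bexI[where x=\<one>]) auto
      qed
    qed
  qed
qed

end

context group begin
lemma dir1:
  assumes cyc: "cyclic_group (G\<lparr>carrier := center_of G\<rparr>)"
    and g: "g \<in> carrier G" and s1: "garside_structure G P1 D1" and s2: "garside_structure G P2 D2"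
  shows "periodic_wrt G D1 g \<longleftrightarrow> periodic_wrt G D2 g"
proof -
  interpret A: gs G P1 D1 by (unfold_locales) fact
  interpret B: gs G P2 D2 by (unfold_locales) fact
  obtain z where z: "z \<in> center_of G" "center_of G = range (\<lambda>n::int. z [^] n)"
    using cyc cyclic_center by blast
  have zc: "z \<in> carrier G" using z by (simp add: center_of_def)
  have zz: "\<forall>c. cen c \<longrightarrow> (\<exists>m::int. c = z [^] m)" using z by (auto simp: cen_center)
  show ?thesis using A.periodic_canon[OF zc zz g] B.periodic_canon[OF zc zz g] by (simp only:)
qed
end


context group begin
lemma cenD: "cen x \<Longrightarrow> g \<in> carrier G \<Longrightarrow> g \<otimes> x = x \<otimes> g"
  by (simp add: cen_def)
lemma cen_car: "cen x \<Longrightarrow> x \<in> carrier G"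
  by (simp add: cen_def)
end

context gs begin

definition eE where "eE = (SOME e::nat. e > 0 \<and> (\<forall>g\<in>carrier G. g \<otimes> D [^] e = D [^] e \<otimes> g))"
definition E where "E = D [^] eE"

lemma eE: "eE > 0 \<and> (\<forall>g\<in>carrier G. g \<otimes> D [^] eE = D [^] eE \<otimes> g)"
  unfolding eE_def by (rule someI_ex[OF central_power])

lemma E_cen: "cen E"
  unfolding cen_def E_def using eE D_P P_car nat_pow_closed by blast
lemma E_P[simp]: "E \<in> P" by (simp add: E_def)
lemma E_car[simp]: "E \<in> carrier G" by (simp add: E_def)
lemma E_pow_cen: "cen (E [^] (k::nat))" by (rule cen_pow_nat[OF E_cen])

lemma E_ne: "carrier G \<noteq> {\<one>} \<Longrightarrow> E \<noteq> \<one>"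
  using triv_pow[of eE] conjunct1[OF eE] unfolding E_def by blast

lemma D_div_E: "D \<otimes> D [^] (eE - 1) = E"
proof -
  have "E = D [^] Suc (eE - 1)" using eE by (simp add: E_def)
  also have "\<dots> = D \<otimes> D [^] (eE - 1)" by (rule nat_pow_Suc2) simp
  finally show ?thesis by simp
qed

lemma S_div_E: assumes "s \<in> S" shows "\<exists>t\<in>P. s \<otimes> t = E"
proof -
  obtain t where t: "t \<in> P" "s \<otimes> t = D" using assms by (auto simp: S_def ldiv_in_def)
  have "s \<otimes> (t \<otimes> D [^] (eE - 1)) = (s \<otimes> t) \<otimes> D [^] (eE - 1)"
    using t(1) S_P[OF assms] by (simp add: m_assoc)
  also have "\<dots> = E" using t(2) D_div_E by simp
  finally show ?thesis using t(1) by (intro bexI[where x="t \<otimes> D [^] (eE - 1)"]) auto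
qed

lemma list_div_E: "set xs \<subseteq> S \<Longrightarrow> \<exists>k::nat. \<exists>c\<in>P. prod_list_in G xs \<otimes> c = E [^] k"
proof (induction xs)
  case Nil then show ?case by (intro exI[where x=0] bexI[where x=\<one>]) auto
next
  case (Cons s xs)
  then obtain k c where kc: "c \<in> P" "prod_list_in G xs \<otimes> c = E [^] (k::nat)" by auto
  have s: "s \<in> S" using Cons by auto
  then obtain t where t: "t \<in> P" "s \<otimes> t = E" using S_div_E by blast
  have sc: "s \<in> carrier G" using s S_P by auto
  have xc: "prod_list_in G xs \<in> carrier G" using Cons.prems S_P P_car by (intro prod_car) auto
  have "prod_list_in G (s # xs) \<otimes> (c \<otimes> t) = s \<otimes> ((prod_list_in G xs \<otimes> c) \<otimes> t)"
    using sc xc kc(1) t(1) by (simp add: m_assoc)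
  also have "\<dots> = s \<otimes> (E [^] k \<otimes> t)" using kc(2) by simp
  also have "\<dots> = s \<otimes> (t \<otimes> E [^] k)" using cenD[OF E_pow_cen, of t k] t(1) by simp
  also have "\<dots> = (s \<otimes> t) \<otimes> E [^] k" using sc t(1) by (simp add: m_assoc)
  also have "\<dots> = E \<otimes> E [^] k" using t(2) by simp
  also have "\<dots> = E [^] Suc k" by (rule nat_pow_Suc2[symmetric]) simp
  finally show ?case using kc(1) t(1) by (intro exI[where x="Suc k"] bexI[where x="c \<otimes> t"]) auto
qed

lemma P_div_E: "b \<in> P \<Longrightarrow> \<exists>k::nat. \<exists>c\<in>P. b \<otimes> c = E [^] k"
  using S_gen list_div_E by blast

lemma lift: assumes "g \<in> carrier G" shows "\<exists>k::nat. E [^] k \<otimes> g \<in> P"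
proof -
  obtain a b where ab: "a \<in> P" "b \<in> P" "g = a \<otimes> inv b" using frac[OF assms] by blast
  obtain k c where kc: "c \<in> P" "b \<otimes> c = E [^] (k::nat)" using P_div_E[OF ab(2)] by blast
  have "E [^] k \<otimes> g = g \<otimes> E [^] k" using cenD[OF E_pow_cen assms] by simp
  also have "\<dots> = a \<otimes> (inv b \<otimes> (b \<otimes> c))" using ab kc(1) by (simp add: kc(2)[symmetric] m_assoc)
  also have "\<dots> = a \<otimes> c" using ab(1,2) kc(1) by simp
  finally have "E [^] k \<otimes> g \<in> P" using ab(1) kc(1) by simp
  then show ?thesis by blast
qed

lemma lift_mono: assumes "g \<in> carrier G" "E [^] (k::nat) \<otimes> g \<in> P" shows "E [^] (j + k) \<otimes> g \<in> P"
proof -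
  have "E [^] (j + k) \<otimes> g = E [^] j \<otimes> (E [^] k \<otimes> g)" using assms by (simp add: nat_pow_mult[symmetric] m_assoc)
  then show ?thesis using assms by simp
qed

lemma lift_many: assumes "\<And>i. i < (n::nat) \<Longrightarrow> f i \<in> carrier G"
  shows "\<exists>K::nat. \<forall>i<n. E [^] K \<otimes> f i \<in> P"
  using assms
proof (induction n)
  case 0 then show ?case by simp
next
  case (Suc n)
  then obtain K :: nat where K: "\<forall>i<n. E [^] K \<otimes> f i \<in> P" by auto
  obtain k where k: "E [^] (k::nat) \<otimes> f n \<in> P" using lift Suc.prems by blast
  have "\<forall>i<Suc n. E [^] (K + k) \<otimes> f i \<in> P"
  proof (intro allI impI)
    fix i assume i: "i < Suc n"
    show "E [^] (K + k) \<otimes> f i \<in> P"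
    proof (cases "i < n")
      case True then show ?thesis using lift_mono[of "f i" K k] K Suc.prems i by (simp add: add.commute)
    next
      case False then have "i = n" using i by simp
      then show ?thesis using lift_mono[of "f n" k K] k Suc.prems by simp
    qed
  qed
  then show ?case by blast
qed

lemma lord_le: "le (lorder_in G P) = ldiv_in G P" by (simp add: lorder_in_def)
lemma lord_car: "carrier (lorder_in G P) = P" by (simp add: lorder_in_def)

lemma roots: assumes w: "cen w" and n: "n > 0" and wn: "w [^] (n::nat) \<in> P" shows "w \<in> P"
proof -
  have wc: "w \<in> carrier G" using w by (simp add: cen_def)
  obtain K :: nat where K: "\<forall>i<n. E [^] K \<otimes> w [^] i \<in> P" using lift_many[of n "\<lambda>i. w [^] i"] wc by auto
  define v where "v i = E [^] K \<otimes> w [^] (i::nat)" for i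
  define A where "A = v ` {..<n}"
  interpret L: lattice "lorder_in G P" using gm by (simp add: garside_monoid_in_def)
  have Afin: "finite A" "A \<subseteq> carrier (lorder_in G P)" "A \<noteq> {}"
    using K n by (auto simp: A_def v_def lord_car)
  have "least (lorder_in G P) (\<Squnion>\<^bsub>lorder_in G P\<^esub> A) (Upper (lorder_in G P) A)"
    by (rule L.finite_sup_least[OF Afin])
  then have le: "y0 \<in> Upper (lorder_in G P) A" "\<And>u. u \<in> Upper (lorder_in G P) A \<Longrightarrow> ldiv_in G P y0 u"
    if "y0 = \<Squnion>\<^bsub>lorder_in G P\<^esub> A" for y0
    using that unfolding least_def lord_le by auto
  define y where "y = \<Squnion>\<^bsub>lorder_in G P\<^esub> A"
  have vA: "i < n \<Longrightarrow> v i \<in> A" for i by (simp add: A_def)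
  have vP: "i < n \<Longrightarrow> v i \<in> P" for i using K by (simp add: v_def)
  have y1: "y \<in> P" using le(1)[OF y_def] unfolding Upper_def lord_car by blast
  have y2: "ldiv_in G P (v i) y" if "i < n" for i
  proof -
    have "\<forall>x. x \<in> A \<inter> P \<longrightarrow> ldiv_in G P x y" using le(1)[OF y_def] unfolding Upper_def lord_car lord_le by blast
    then show ?thesis using vA[OF that] vP[OF that] by blast
  qed
  have y3: "ldiv_in G P y u" if "u \<in> P" "\<forall>i<n. ldiv_in G P (v i) u" for u
  proof -
    have "u \<in> Upper (lorder_in G P) A" unfolding Upper_def lord_car lord_le A_def using that by blast
    then show ?thesis using le(2)[OF y_def] by blast
  qed
  note y = y1 y2 y3
  have yc: "y \<in> carrier G" using y(1) by simp
  have vc: "v i \<in> carrier G" for i using wc by (simp add: v_def)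
  have vS: "v (Suc i) = w \<otimes> v i" for i
  proof -
    have "v (Suc i) = E [^] K \<otimes> (w [^] i \<otimes> w)" by (simp add: v_def)
    also have "\<dots> = E [^] K \<otimes> (w \<otimes> w [^] i)" using cenD[OF w, of "w [^] i"] wc by simp
    also have "\<dots> = w \<otimes> v i" using wc by (simp add: v_def swap[OF _ wc] cenD[OF E_pow_cen wc])
    finally show ?thesis .
  qed
  obtain t where t: "t \<in> P" "v (n - 1) \<otimes> t = y" using y(2)[of "n-1"] n by (auto simp: ldiv_in_def)
  have wy: "w \<otimes> y = v 0 \<otimes> (w [^] n \<otimes> t)"
  proof -
    have "w \<otimes> y = v (Suc (n - 1)) \<otimes> t" using t vS vc wc by (simp add: m_assoc)
    also have "\<dots> = v n \<otimes> t" using n by simp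
    also have "\<dots> = v 0 \<otimes> (w [^] n \<otimes> t)" using wc t(1) by (simp add: v_def m_assoc)
    finally show ?thesis .
  qed
  have v0: "v 0 \<in> P" using K n by (simp add: v_def)
  have wyP: "w \<otimes> y \<in> P" using wy v0 wn t(1) by simp
  have "\<forall>i<n. ldiv_in G P (v i) (w \<otimes> y)"
  proof (intro allI impI)
    fix i assume i: "i < n"
    show "ldiv_in G P (v i) (w \<otimes> y)"
    proof (cases i)
      case 0 then show ?thesis using wy wn t(1) by (auto simp: ldiv_in_def)
    next
      case (Suc j)
      obtain t' where t': "t' \<in> P" "v j \<otimes> t' = y" using y(2)[of j] i Suc by (auto simp: ldiv_in_def)
      have "v i \<otimes> t' = w \<otimes> y" using Suc vS vc wc t' by (simp add: m_assoc)
      then show ?thesis using t'(1) by (auto simp: ldiv_in_def)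
    qed
  qed
  then have "ldiv_in G P y (w \<otimes> y)" using y(3) wyP by blast
  then obtain u where u: "u \<in> P" "y \<otimes> u = w \<otimes> y" by (auto simp: ldiv_in_def)
  then have "y \<otimes> u = y \<otimes> w" using cenD[OF w yc] by simp
  then have "u = w" using yc wc u(1) by simp
  then show ?thesis using u by simp
qed

end

context gs begin

lemma atom_in_list: assumes a: "atom_in G P a" shows "set xs \<subseteq> P \<Longrightarrow> prod_list_in G xs = a \<Longrightarrow> a \<in> set xs"
proof (induction xs)
  case Nil
  have "a \<noteq> \<one>" using a by (simp add: atom_in_def)
  moreover have "a = \<one>" using Nil.prems(2) by simp
  ultimately show ?case by contradiction
next
  case (Cons x xs)
  have xP: "x \<in> P" and pP: "prod_list_in G xs \<in> P" using Cons.prems by auto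
  have eq: "a = x \<otimes> prod_list_in G xs" using Cons.prems by simp
  have at: "\<forall>b\<in>P. \<forall>c\<in>P. a = b \<otimes> c \<longrightarrow> b = \<one> \<or> c = \<one>" using a by (simp add: atom_in_def)
  have "x = \<one> \<or> prod_list_in G xs = \<one>" by (rule at[rule_format, OF xP pP eq])
  then show ?case
  proof
    assume "x = \<one>"
    then have "prod_list_in G xs = a" using Cons.prems pP by simp
    then show ?thesis using Cons by simp
  next
    assume "prod_list_in G xs = \<one>"
    then have "a = x" using Cons.prems xP by simp
    then show ?thesis by simp
  qed
qed

lemma At_S: "x \<in> At \<Longrightarrow> x \<in> S"
proof -
  assume x: "x \<in> At"
  then have xP: "x \<in> P" by (rule At_P)
  obtain xs where xs: "set xs \<subseteq> S" "prod_list_in G xs = x" using S_gen[OF xP] by blast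
  have "set xs \<subseteq> P" using xs(1) S_P by blast
  then have "x \<in> set xs" using atom_in_list[of x xs] x xs(2) by (simp add: At_def)
  then show "x \<in> S" using xs(1) by blast
qed

lemma At_fin: "finite At"
  by (rule finite_subset[OF _ S_fin]) (use At_S in blast)

lemma div_fin: assumes x: "x \<in> P" shows "finite {a\<in>P. ldiv_in G P a x}"
proof -
  have "{a\<in>P. ldiv_in G P a x} \<subseteq> prod_list_in G ` {xs. set xs \<subseteq> At \<and> length xs \<le> len x}"
  proof
    fix a assume "a \<in> {a\<in>P. ldiv_in G P a x}"
    then obtain t where a: "a \<in> P" "t \<in> P" "a \<otimes> t = x" by (auto simp: ldiv_in_def)
    have "len a \<le> len x" using len_mult[OF a(1,2)] a(3) by simp
    moreover obtain xs where "set xs \<subseteq> At" "prod_list_in G xs = a" "length xs = len a"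
      using len_ex[OF a(1)] by blast
    ultimately show "a \<in> prod_list_in G ` {xs. set xs \<subseteq> At \<and> length xs \<le> len x}" by force
  qed
  moreover have "finite (prod_list_in G ` {xs. set xs \<subseteq> At \<and> length xs \<le> len x})"
    using finite_lists_length_le[OF At_fin] by blast
  ultimately show ?thesis by (rule finite_subset)
qed

lemma cen_swap: assumes "cen x" "a \<in> carrier G" "c \<in> carrier G" "a \<otimes> c = x" shows "c \<otimes> a = x"
proof -
  have "c \<otimes> a = inv a \<otimes> (a \<otimes> c) \<otimes> a" using assms(2,3) by (simp add: m_assoc)
  also have "\<dots> = inv a \<otimes> x \<otimes> a" using assms(4) by simp
  also have "\<dots> = x" by (rule cen_conj[OF assms(1,2)])
  finally show ?thesis .
qed

lemma new_struct: assumes x: "x \<in> P" "cen x" "ldiv_in G P D x" shows "garside_structure G P x"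
  unfolding garside_structure_def
proof (intro conjI)
  show "garside_monoid_in G P" by (rule gm)
  show "\<forall>g\<in>carrier G. \<exists>a\<in>P. \<exists>b\<in>P. g = a \<otimes> inv b" using frac by blast
  show "garside_element_in G P x"
    unfolding garside_element_in_def
  proof (intro conjI ballI)
    show "x \<in> P" by fact
    show "finite {a\<in>P. ldiv_in G P a x}" by (rule div_fin[OF x(1)])
    fix a assume a: "a \<in> P"
    show "ldiv_in G P a x = rdiv_in G P a x"
    proof
      assume "ldiv_in G P a x"
      then obtain c where "c \<in> P" "a \<otimes> c = x" by (auto simp: ldiv_in_def)
      then show "rdiv_in G P a x" using cen_swap[OF x(2), of a c] a by (auto simp: rdiv_in_def)
    next
      assume "rdiv_in G P a x"
      then obtain c where "c \<in> P" "c \<otimes> a = x" by (auto simp: rdiv_in_def)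
      then show "ldiv_in G P a x" using cen_swap[OF x(2), of c a] a by (auto simp: ldiv_in_def)
    qed
    obtain xs where xs: "set xs \<subseteq> At" "prod_list_in G xs = a" using At_gen[OF a] by blast
    obtain u where u: "u \<in> P" "D \<otimes> u = x" using x(3) by (auto simp: ldiv_in_def)
    have "set xs \<subseteq> {b\<in>P. ldiv_in G P b x}"
    proof
      fix b assume "b \<in> set xs"
      then have b: "b \<in> S" using xs At_S by blast
      then obtain t where t: "t \<in> P" "b \<otimes> t = D" by (auto simp: S_def ldiv_in_def)
      have bP: "b \<in> P" using b S_P by blast
      have "b \<otimes> (t \<otimes> u) = x" using t u bP by (simp add: m_assoc[symmetric])
      then show "b \<in> {b\<in>P. ldiv_in G P b x}" using bP t(1) u(1) by (auto simp: ldiv_in_def)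
    qed
    then show "\<exists>xs. set xs \<subseteq> {b\<in>P. ldiv_in G P b x} \<and> prod_list_in G xs = a" using xs(2) by blast
  qed
qed

end

context gs begin

lemma int2nat: assumes c: "c \<in> P" and eq: "c [^] (a::int) = E [^] (b::int)" and a: "a > 0"
  shows "c = \<one> \<or> (\<exists>(n::nat) (m::nat). n > 0 \<and> m > 0 \<and> c [^] n = E [^] m)"
proof -
  have cc: "c \<in> carrier G" using c by simp
  define n where "n = nat a"
  have n: "n > 0" "a = int n" using a by (auto simp: n_def)
  have ca: "c [^] a = c [^] n" using n(2) by (simp add: int_pow_int)
  show ?thesis
  proof (cases "b \<ge> 0")
    case True
    define m where "m = nat b"
    have "b = int m" using True by (simp add: m_def)
    then have "c [^] n = E [^] m" using eq ca by (simp add: int_pow_int)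
    then show ?thesis
    proof (cases "m = 0")
      case True
      then have "c [^] n = \<one>" using \<open>c [^] n = E [^] m\<close> by simp
      then show ?thesis using pow_ne_one[OF c _ n(1)] by blast
    next
      case False then show ?thesis using \<open>c [^] n = E [^] m\<close> n(1) by blast
    qed
  next
    case False
    define m where "m = nat (- b)"
    have "b = - int m" using False by (simp add: m_def)
    then have "E [^] b = inv (E [^] m)" by (simp add: int_pow_neg_int)
    then have "c [^] n = inv (E [^] m)" using eq ca by simp
    then have "c [^] n \<otimes> E [^] m = \<one>" using cc by simp
    then have "c [^] n = \<one>" by (rule no_units(1)[OF pow_P[OF c] pow_P[OF E_P]])
    then show ?thesis using pow_ne_one[OF c _ n(1)] by blast
  qed
qed

lemma rank1:
  assumes H: "\<forall>g\<in>carrier G. \<forall>P1 D1 P2 D2. garside_structure G P1 D1 \<longrightarrow> garside_structure G P2 D2 \<longrightarrow>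
            (periodic_wrt G D1 g \<longleftrightarrow> periodic_wrt G D2 g)"
    and nt: "carrier G \<noteq> {\<one>}" and c: "c \<in> P" "cen c"
  shows "c = \<one> \<or> (\<exists>(n::nat) (m::nat). n > 0 \<and> m > 0 \<and> c [^] n = E [^] m)"
proof -
  have cc: "c \<in> carrier G" using c by simp
  define x where "x = E \<otimes> c"
  have xP: "x \<in> P" using c by (simp add: x_def)
  have xc: "cen x" unfolding x_def by (rule cen_mult[OF E_cen c(2)])
  have "D \<otimes> (D [^] (eE - 1) \<otimes> c) = x" using cc by (simp add: x_def D_div_E[symmetric] m_assoc)
  then have Dx: "ldiv_in G P D x" using c(1) by (auto simp: ldiv_in_def)
  have sx: "garside_structure G P x" by (rule new_struct[OF xP xc Dx])
  have pD: "periodic_wrt G D E"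
  proof -
    have "inv \<one> \<otimes> E [^] (1::int) \<otimes> \<one> = D [^] (int eE)" by (simp add: E_def int_pow_int)
    then show ?thesis unfolding periodic_wrt_def using conjunct1[OF eE]
      by (intro disjI2 exI[where x="1::int"] exI[where x="int eE"] conjI bexI[where x=\<one>]) auto
  qed
  have "periodic_wrt G x E" using H[rule_format, OF E_car gs sx] pD by blast
  moreover have "E \<noteq> \<one>" by (rule E_ne[OF nt])
  ultimately obtain k l h where klh: "k \<noteq> (0::int)" "l \<noteq> (0::int)" "h \<in> carrier G"
      "inv h \<otimes> E [^] k \<otimes> h = x [^] l"
    unfolding periodic_wrt_def by blast
  have "E [^] k = x [^] l" by (rule conj_cen[OF cen_pow[OF xc] klh(3) _ klh(4)]) simp
  also have "\<dots> = E [^] l \<otimes> c [^] l" unfolding x_def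
    by (rule int_pow_mult_distrib) (use cenD[OF c(2) E_car] cc in auto)
  finally have e1: "E [^] l \<otimes> E [^] (k - l) = E [^] l \<otimes> c [^] l"
    by (simp add: int_pow_mult[symmetric])
  have e2: "c [^] l = E [^] (k - l)" using e1 cc by simp
  show ?thesis
  proof (cases "l > 0")
    case True then show ?thesis using int2nat[OF c(1) e2] by blast
  next
    case False
    then have l: "- l > 0" using klh(2) by simp
    have "c [^] (- l) = inv (c [^] l)" using cc by (rule int_pow_neg)
    also have "\<dots> = inv (E [^] (k - l))" using e2 by simp
    also have "\<dots> = E [^] (- (k - l))" by (rule int_pow_neg[symmetric]) simp
    finally show ?thesis using int2nat[OF c(1) _ l] by blast
  qed
qed

lemma cen_split:
  assumes H: "\<forall>g\<in>carrier G. \<forall>P1 D1 P2 D2. garside_structure G P1 D1 \<longrightarrow> garside_structure G P2 D2 \<longrightarrow>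
            (periodic_wrt G D1 g \<longleftrightarrow> periodic_wrt G D2 g)"
    and nt: "carrier G \<noteq> {\<one>}" and z: "cen z"
  shows "z \<in> P \<or> inv z \<in> P"
proof -
  have zc: "z \<in> carrier G" using z by (rule cen_car)
  obtain k :: nat where k: "E [^] k \<otimes> z \<in> P" using lift[OF zc] by blast
  define c where "c = E [^] k \<otimes> z"
  have cc: "cen c" unfolding c_def by (rule cen_mult[OF E_pow_cen z])
  have cP: "c \<in> P" using k by (simp add: c_def)
  from rank1[OF H nt cP cc] show ?thesis
  proof
    assume "c = \<one>"
    then have "inv z = E [^] k" using zc by (simp add: c_def inv_equality)
    then show ?thesis by simp
  next
    assume "\<exists>(n::nat) (m::nat). n > 0 \<and> m > 0 \<and> c [^] n = E [^] m"
    then obtain n m :: nat where nm: "n > 0" "c [^] n = E [^] m" by blast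
    have "c [^] n = (E [^] k) [^] n \<otimes> z [^] n" unfolding c_def
      by (rule pow_mult_distrib) (use cenD[OF z] zc in auto)
    then have eq: "E [^] (k * n) \<otimes> z [^] n = E [^] m" using nm(2) by (simp add: nat_pow_pow)
    show ?thesis
    proof (cases "k * n \<le> m")
      case True
      then have "E [^] (k * n) \<otimes> z [^] n = E [^] (k * n) \<otimes> E [^] (m - k * n)"
        using eq by (simp add: nat_pow_mult)
      then have "z [^] n = E [^] (m - k * n)" using zc by simp
      then have "z [^] n \<in> P" by simp
      then show ?thesis using roots[OF z nm(1)] by blast
    next
      case False
      then have "E [^] m \<otimes> (E [^] (k * n - m) \<otimes> z [^] n) = E [^] m \<otimes> \<one>"
        using eq zc by (simp add: nat_pow_mult m_assoc[symmetric])
      then have "E [^] (k * n - m) \<otimes> z [^] n = \<one>" using zc by (simp del: r_one)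
      then have "inv (z [^] n) = E [^] (k * n - m)" using zc by (simp add: inv_equality)
      then have "(inv z) [^] n \<in> P" using zc by (simp add: nat_pow_inv)
      then show ?thesis using roots[OF cen_inv[OF z] nm(1)] by blast
    qed
  qed
qed

end

context gs begin

lemma dir2:
  assumes H: "\<forall>g\<in>carrier G. \<forall>P1 D1 P2 D2. garside_structure G P1 D1 \<longrightarrow> garside_structure G P2 D2 \<longrightarrow>
            (periodic_wrt G D1 g \<longleftrightarrow> periodic_wrt G D2 g)"
  shows "\<exists>z\<in>center_of G. center_of G = range (\<lambda>n::int. z [^] n)"
proof (cases "carrier G = {\<one>}")
  case True
  have "center_of G = {\<one>}" using True cen_one cen_center[symmetric] by (auto simp: center_of_def)
  moreover have "range (\<lambda>n::int. \<one> [^] n) = {\<one>}" by auto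
  ultimately show ?thesis by auto
next
  case nt: False
  define Q where "Q c \<longleftrightarrow> c \<in> P \<and> cen c \<and> c \<noteq> \<one>" for c
  have "Q E" using E_cen E_ne[OF nt] by (simp add: Q_def)
  then obtain c0 where c0: "Q c0" "\<And>c. Q c \<Longrightarrow> len c0 \<le> len c"
    using ex_has_least_nat[of Q E len] by blast
  have c0P: "c0 \<in> P" and c0c: "cen c0" and c01: "c0 \<noteq> \<one>" using c0(1) by (auto simp: Q_def)
  have c0car: "c0 \<in> carrier G" using c0P by simp
  have c0div: "\<exists>c'\<in>P. c0 \<otimes> c' = c" if c: "c \<in> P" "cen c" "c \<noteq> \<one>" for c
  proof -
    have cc: "c \<in> carrier G" using c by simp
    define y where "y = inv c0 \<otimes> c"
    have yc: "cen y" unfolding y_def by (rule cen_mult[OF cen_inv[OF c0c] c(2)])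
    have ycar: "y \<in> carrier G" using yc by (rule cen_car)
    have cy: "c0 \<otimes> y = c" using c0car cc by (simp add: y_def)
    from cen_split[OF H nt yc] show ?thesis
    proof
      assume "y \<in> P" then show ?thesis using cy by blast
    next
      assume iy: "inv y \<in> P"
      have ciy: "c \<otimes> inv y = c0" using cy[symmetric] c0car ycar by (simp add: m_assoc)
      show ?thesis
      proof (cases "inv y = \<one>")
        case True
        then have "c = c0" using ciy cc by simp
        then show ?thesis by (intro bexI[where x=\<one>]) (auto simp: c0car)
      next
        case False
        have "len c + len (inv y) \<le> len c0" using len_mult[OF c(1) iy] ciy by simp
        moreover have "0 < len (inv y)" using len_pos[OF iy False] .
        moreover have "len c0 \<le> len c" using c0(2) c by (simp add: Q_def)
        ultimately show ?thesis by simp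
      qed
    qed
  qed
  have allpow: "\<And>c. c \<in> P \<Longrightarrow> cen c \<Longrightarrow> \<exists>j::nat. c = c0 [^] j"
  proof -
    fix c show "c \<in> P \<Longrightarrow> cen c \<Longrightarrow> \<exists>j::nat. c = c0 [^] j"
    proof (induction "len c" arbitrary: c rule: less_induct)
      case less
      show ?case
      proof (cases "c = \<one>")
        case True then show ?thesis by (intro exI[where x=0]) simp
      next
        case False
        obtain c' where c': "c' \<in> P" "c0 \<otimes> c' = c" using c0div[OF less.prems False] by blast
        have c'car: "c' \<in> carrier G" using c'(1) by simp
        have "c' = inv c0 \<otimes> (c0 \<otimes> c')" using c'car c0car by simp
        then have "c' = inv c0 \<otimes> c" using c'(2) by simp
        then have c'c: "cen c'" using cen_mult[OF cen_inv[OF c0c] less.prems(2)] by simp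
        have "len c0 + len c' \<le> len c" using len_mult[OF c0P c'(1)] c'(2) by simp
        moreover have "0 < len c0" by (rule len_pos[OF c0P c01])
        ultimately have "len c' < len c" by simp
        then obtain j :: nat where "c' = c0 [^] j" using less.hyps c'(1) c'c by blast
        then have "c = c0 \<otimes> c0 [^] j" using c'(2) by simp
        also have "\<dots> = c0 [^] Suc j" by (rule nat_pow_Suc2[symmetric, OF c0car])
        finally have "c = c0 [^] Suc j" .
        then show ?thesis by blast
      qed
    qed
  qed
  have "center_of G = range (\<lambda>n::int. c0 [^] n)"
  proof
    show "center_of G \<subseteq> range (\<lambda>n::int. c0 [^] n)"
    proof
      fix z assume "z \<in> center_of G"
      then have z: "cen z" by (simp add: cen_center)
      have zc: "z \<in> carrier G" using z by (rule cen_car)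
      from cen_split[OF H nt z] show "z \<in> range (\<lambda>n::int. c0 [^] n)"
      proof
        assume "z \<in> P"
        then obtain j :: nat where "z = c0 [^] j" using allpow z by blast
        then have "z = c0 [^] (int j)" by (simp add: int_pow_int)
        then show ?thesis by blast
      next
        assume "inv z \<in> P"
        then obtain j :: nat where "inv z = c0 [^] j" using allpow cen_inv[OF z] by blast
        then have "z = inv (c0 [^] j)" using zc by (metis inv_inv)
        then have "z = c0 [^] (- int j)" using c0car by (simp add: int_pow_neg_int)
        then show ?thesis by blast
      qed
    qed
    show "range (\<lambda>n::int. c0 [^] n) \<subseteq> center_of G"
      using cen_pow[OF c0c] cen_center by blast
  qed
  moreover have "c0 \<in> center_of G" using c0c cen_center by blast
  ultimately show ?thesis by blast
qed

end

theorem mainTheorem2: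
  fixes G :: "('a, 'b) monoid_scheme"
  assumes "garside_group G"
  shows "(\<forall>g\<in>carrier G. \<forall>P1 D1 P2 D2.
            garside_structure G P1 D1 \<longrightarrow> garside_structure G P2 D2 \<longrightarrow>
            (periodic_wrt G D1 g \<longleftrightarrow> periodic_wrt G D2 g))
         \<longleftrightarrow> cyclic_group (G\<lparr>carrier := center_of G\<rparr>)"
proof -
  have grp: "group G" using assms by (simp add: garside_group_def)
  obtain P D where st: "garside_structure G P D" using assms by (auto simp: garside_group_def)
  interpret group G by (rule grp)
  interpret gs G P D by unfold_locales (rule st)
  show ?thesis
  proof
    assume H: "\<forall>g\<in>carrier G. \<forall>P1 D1 P2 D2.
            garside_structure G P1 D1 \<longrightarrow> garside_structure G P2 D2 \<longrightarrow>
            (periodic_wrt G D1 g \<longleftrightarrow> periodic_wrt G D2 g)"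
    show "cyclic_group (G\<lparr>carrier := center_of G\<rparr>)"
      using dir2[OF H] cyclic_center by blast
  next
    assume cyc: "cyclic_group (G\<lparr>carrier := center_of G\<rparr>)"
    show "\<forall>g\<in>carrier G. \<forall>P1 D1 P2 D2.
            garside_structure G P1 D1 \<longrightarrow> garside_structure G P2 D2 \<longrightarrow>
            (periodic_wrt G D1 g \<longleftrightarrow> periodic_wrt G D2 g)"
      using dir1[OF cyc] by blast
  qed
qed

end
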